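(* Let $r$ and $d$ be fixed positive integers. Then there is a function $L:\mathbb{N}\to\mathbb{N}$ with $L(t) = rt + o(t)$ as $t \to \infty$ such that the following holds for every positive integer $t$. Given any set $X$ of $L(t)$ points with integer coordinates in $\mathbb{R}^d$, there is a partition of $X$ into $r$ sets $X_1, \ldots, X_r$ such that for every $C \subset X$ with $|C| \le t$, the convex hulls $\operatorname{conv}(X_1 \setminus C), \ldots, \operatorname{conv}(X_r \setminus C)$ have a common point with integer coordinates, i.e. $\bigcap_{j=1}^r \operatorname{conv}(X_j\setminus C) \cap \mathbb{Z}^d \neq \emptyset$.
   Context: $\operatorname{conv}$ denotes the usual convex hull in $\mathbb{R}^d$; the $o(t)$ term may depend on the fixed $r$ and $d$. *)

theory Defs
  imports "HOL-Analysis.Analysis" "HOL-Library.Landau_Symbols"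
begin

definition int_point :: "real ^ 'd \<Rightarrow> bool" where
  "int_point x \<longleftrightarrow> (\<forall>i. x $ i \<in> \<int>)"

end

theory Submission
  imports Defs "HOL-Probability.Probability" "HOL-Real_Asymp.Real_Asymp"
begin


definition par :: "real^'d \<Rightarrow> ('d \<Rightarrow> bool)" where
  "par z = (\<lambda>i. even \<lfloor>z $ i\<rfloor>)"

lemma mid_int:
  assumes "int_point u" "int_point v" "par u = par v"
  shows "int_point ((1/2) *\<^sub>R (u + v))"
  unfolding int_point_def
proof
  fix i
  obtain m where m: "u $ i = of_int m" using assms(1) unfolding int_point_def by (meson Ints_cases)
  obtain k where k: "v $ i = of_int k" using assms(2) unfolding int_point_def by (meson Ints_cases)
  have "even m = even k" using fun_cong[OF assms(3), of i] m k by (simp add: par_def)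
  then have "even (m + k)" by auto
  then obtain l where l: "m + k = 2 * l" by (rule evenE)
  have "real_of_int m + real_of_int k = 2 * real_of_int l"
    using arg_cong[OF l, of real_of_int] by simp
  then have "(1/2) * (u $ i + v $ i) = of_int l" using m k by simp
  then show "((1/2) *\<^sub>R (u + v)) $ i \<in> \<int>" by simp
qed

lemma half_lt1: "(x::real) = 1/2 * (y + u) \<Longrightarrow> y < c \<Longrightarrow> u \<le> c \<Longrightarrow> x < c" by argo
lemma half_lt2: "(x::real) = 1/2 * (y + u) \<Longrightarrow> y \<le> c \<Longrightarrow> u < c \<Longrightarrow> x < c" by argo

lemma doignon:
  fixes S :: "(real^'d) set" and I :: "'i set" and A :: "'i \<Rightarrow> real^'d" and c :: "'i \<Rightarrow> real"
  assumes S: "finite S" "\<forall>s\<in>S. int_point s"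
    and mid: "\<forall>u\<in>S. \<forall>v\<in>S. int_point ((1/2) *\<^sub>R (u+v)) \<longrightarrow> (1/2) *\<^sub>R (u+v) \<in> S"
    and I: "finite I" and cov: "\<forall>s\<in>S. \<exists>i\<in>I. A i \<bullet> s \<ge> c i"
  shows "\<exists>J\<subseteq>I. card J \<le> 2^CARD('d) \<and> (\<forall>s\<in>S. \<exists>i\<in>J. A i \<bullet> s \<ge> c i)"
proof -
  define P where "P J \<longleftrightarrow> J \<subseteq> I \<and> (\<forall>s\<in>S. \<exists>i\<in>J. A i \<bullet> s \<ge> c i)" for J
  have "P I" using cov by (simp add: P_def)
  then obtain J where PJ: "P J" and minJ: "\<And>J'. P J' \<Longrightarrow> card J \<le> card J'"
    using ex_has_least_nat[of P I card] by blast
  have JI: "J \<subseteq> I" and covJ: "\<forall>s\<in>S. \<exists>i\<in>J. A i \<bullet> s \<ge> c i" using PJ by (auto simp: P_def)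
  have finJ: "finite J" using JI I finite_subset by blast
  show ?thesis
  proof (rule ccontr)
    assume "\<not> ?thesis"
    then have big: "card J > 2^CARD('d)" using JI covJ not_le by blast
    have minq: "\<exists>s\<in>S. \<forall>i\<in>J-{q}. A i \<bullet> s < c i" if q: "q \<in> J" for q
    proof (rule ccontr)
      assume "\<not> ?thesis"
      then have "P (J - {q})" using JI by (force simp: P_def not_less)
      then have "card J \<le> card (J - {q})" by (rule minJ)
      moreover have "card (J - {q}) < card J" using finJ q by (meson card_Diff1_less)
      ultimately show False by simp
    qed
    define V where "V q = {v \<in> insert (c q) ((\<lambda>s. A q \<bullet> s) ` S). v \<ge> c q}" for q
    define Cands where "Cands = (PiE J V) \<inter> {c'. \<forall>s\<in>S. \<exists>i\<in>J. A i \<bullet> s \<ge> c' i}"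
    have finV: "finite (V q)" for q
    proof -
      have "V q \<subseteq> insert (c q) ((\<lambda>s. A q \<bullet> s) ` S)" by (auto simp: V_def)
      then show ?thesis using S(1) finite_subset by blast
    qed
    have finC: "finite Cands" unfolding Cands_def
      by (intro finite_Int disjI1 finite_PiE finJ finV)
    have cinC: "restrict c J \<in> Cands" using covJ by (auto simp: Cands_def V_def)
    obtain c' where c'C: "c' \<in> Cands" and c'max: "\<And>c''. c'' \<in> Cands \<Longrightarrow> sum c'' J \<le> sum c' J"
    proof -
      have "finite ((\<lambda>f. sum f J) ` Cands)" "(\<lambda>f. sum f J) ` Cands \<noteq> {}" using finC cinC by auto
      then have "Max ((\<lambda>f. sum f J) ` Cands) \<in> (\<lambda>f. sum f J) ` Cands" by (rule Max_in)
      then obtain c' where "c' \<in> Cands" "sum c' J = Max ((\<lambda>f. sum f J) ` Cands)" by auto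
      moreover have "\<And>c''. c'' \<in> Cands \<Longrightarrow> sum c'' J \<le> Max ((\<lambda>f. sum f J) ` Cands)"
        using finC by (intro Max_ge) auto
      ultimately show ?thesis using that by metis
    qed
    have c'V: "\<And>q. q \<in> J \<Longrightarrow> c' q \<in> V q" and c'ext: "\<And>q. q \<notin> J \<Longrightarrow> c' q = undefined"
      using c'C by (auto simp: Cands_def PiE_def extensional_def)
    have c'ge: "\<And>q. q \<in> J \<Longrightarrow> c' q \<ge> c q" using c'V by (auto simp: V_def)
    have c'cov: "\<forall>s\<in>S. \<exists>i\<in>J. A i \<bullet> s \<ge> c' i" using c'C by (auto simp: Cands_def)
    have tight: "\<exists>z\<in>S. A q \<bullet> z = c' q \<and> (\<forall>i\<in>J-{q}. A i \<bullet> z < c' i)" if q: "q \<in> J" for q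
    proof -
      define Z where "Z = {s\<in>S. \<forall>i\<in>J-{q}. A i \<bullet> s < c' i}"
      obtain s0 where "s0 \<in> S" "\<forall>i\<in>J-{q}. A i \<bullet> s0 < c i" using minq[OF q] by blast
      then have "s0 \<in> Z" using c'ge by (force simp: Z_def)
      have finZ: "finite Z" using S by (simp add: Z_def)
      obtain z where zZ: "z \<in> Z" and zmin: "\<And>s. s \<in> Z \<Longrightarrow> A q \<bullet> z \<le> A q \<bullet> s"
      proof -
        have "Min ((\<lambda>s. A q \<bullet> s) ` Z) \<in> (\<lambda>s. A q \<bullet> s) ` Z" using finZ \<open>s0 \<in> Z\<close> by (intro Min_in) auto
        then obtain z where "z \<in> Z" "A q \<bullet> z = Min ((\<lambda>s. A q \<bullet> s) ` Z)" by auto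
        moreover have "\<And>s. s \<in> Z \<Longrightarrow> Min ((\<lambda>s. A q \<bullet> s) ` Z) \<le> A q \<bullet> s" using finZ by (intro Min_le) auto
        ultimately show ?thesis using that by metis
      qed
      have zS: "z \<in> S" and zo: "\<forall>i\<in>J-{q}. A i \<bullet> z < c' i" using zZ by (auto simp: Z_def)
      have ge: "A q \<bullet> z \<ge> c' q" using c'cov zS zo by force
      have "\<not> A q \<bullet> z > c' q"
      proof
        assume gt: "A q \<bullet> z > c' q"
        define c'' where "c'' = c'(q := A q \<bullet> z)"
        have "c'' \<in> Cands"
        proof -
          have "c'' q \<in> V q" using gt c'ge[OF q] zS by (auto simp: c''_def V_def)
          then have "c'' \<in> PiE J V" using c'V c'ext q
            by (auto simp: PiE_iff extensional_def c''_def)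
          moreover have "\<forall>s\<in>S. \<exists>i\<in>J. A i \<bullet> s \<ge> c'' i"
          proof
            fix s assume sS: "s \<in> S"
            show "\<exists>i\<in>J. A i \<bullet> s \<ge> c'' i"
            proof (cases "s \<in> Z")
              case True
              then show ?thesis using zmin[OF True] q by (auto simp: c''_def intro!: bexI[of _ q])
            next
              case False
              then obtain i where "i \<in> J - {q}" "A i \<bullet> s \<ge> c' i" using sS by (auto simp: Z_def not_less)
              then show ?thesis by (auto simp: c''_def intro!: bexI[of _ i])
            qed
          qed
          ultimately show ?thesis by (simp add: Cands_def)
        qed
        then have "sum c'' J \<le> sum c' J" by (rule c'max)
        moreover have "sum c' J < sum c'' J"
          by (rule sum_strict_mono_ex1[OF finJ]) (use q gt in \<open>auto simp: c''_def\<close>)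
        ultimately show False by simp
      qed
      then show ?thesis using ge zS zo by (intro bexI[of _ z]) auto
    qed
    define z where "z q = (SOME z. z \<in> S \<and> A q \<bullet> z = c' q \<and> (\<forall>i\<in>J-{q}. A i \<bullet> z < c' i))" for q
    have zq: "z q \<in> S \<and> A q \<bullet> z q = c' q \<and> (\<forall>i\<in>J-{q}. A i \<bullet> z q < c' i)" if "q \<in> J" for q
      unfolding z_def using someI_ex[OF tight[OF that, unfolded Bex_def]] by blast
    have "\<not> inj_on (\<lambda>q. par (z q)) J"
    proof
      assume "inj_on (\<lambda>q. par (z q)) J"
      then have "card J \<le> card (UNIV :: ('d \<Rightarrow> bool) set)"
        by (rule card_inj_on_le) auto
      also have "\<dots> = 2^CARD('d)" by (simp add: card_fun)
      finally show False using big by simp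
    qed
    then obtain q1 q2 where q12: "q1 \<in> J" "q2 \<in> J" "q1 \<noteq> q2" "par (z q1) = par (z q2)"
      by (auto simp: inj_on_def)
    define w where "w = (1/2) *\<^sub>R (z q1 + z q2)"
    have "int_point w" unfolding w_def using q12 zq S(2) by (intro mid_int) auto
    then have wS: "w \<in> S" unfolding w_def using mid zq q12 by blast
    have "A i \<bullet> w < c' i" if i: "i \<in> J" for i
    proof -
      have e: "A i \<bullet> w = (1/2) * (A i \<bullet> z q1 + A i \<bullet> z q2)" by (simp add: w_def inner_add_right)
      have l: "A i \<bullet> z q1 \<le> c' i" "A i \<bullet> z q2 \<le> c' i" and d: "A i \<bullet> z q1 < c' i \<or> A i \<bullet> z q2 < c' i"
        using zq[OF q12(1)] zq[OF q12(2)] i q12(3) by (cases "i = q1"; cases "i = q2"; force)+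
      from d show ?thesis
      proof
        assume "A i \<bullet> z q1 < c' i" then show ?thesis using half_lt1[OF e _ l(2)] by blast
      next
        assume "A i \<bullet> z q2 < c' i" then show ?thesis using half_lt2[OF e l(1)] by blast
      qed
    qed
    then show False using c'cov wS by (meson not_less)
  qed
qed



definition shatters :: "'a set set \<Rightarrow> 'a set \<Rightarrow> bool" where
  "shatters F S \<longleftrightarrow> (\<lambda>A. A \<inter> S) ` F = Pow S"

lemma pajor:
  assumes "finite X" "F \<subseteq> Pow X"
  shows "card F \<le> card {S. S \<subseteq> X \<and> shatters F S}"
  using assms
proof (induction X arbitrary: F rule: finite_induct)
  case empty
  then have "F \<subseteq> {{}}" by auto
  then show ?case
  proof (cases "F = {}")
    case False
    with \<open>F \<subseteq> {{}}\<close> have "F = {{}}" by auto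
    then have "{S. S \<subseteq> {} \<and> shatters F S} = {{}}" by (auto simp: shatters_def)
    then show ?thesis using \<open>F = {{}}\<close> by simp
  qed simp
next
  case (insert x X0)
  define Fa where "Fa = {A\<in>F. x \<notin> A}"
  define Fb where "Fb = {A\<in>F. x \<in> A}"
  define F0 where "F0 = (\<lambda>A. A - {x}) ` F"
  define F1 where "F1 = {B. B \<in> F \<and> insert x B \<in> F \<and> x \<notin> B}"
  have finF: "finite F" using insert.prems insert.hyps(1) by (meson finite_Pow_iff finite_insert finite_subset)
  have F0sub: "F0 \<subseteq> Pow X0" using insert.prems by (auto simp: F0_def)
  have F1sub: "F1 \<subseteq> Pow X0" using insert.prems by (auto simp: F1_def)
  have IH0: "card F0 \<le> card {S. S \<subseteq> X0 \<and> shatters F0 S}" by (rule insert.IH[OF F0sub])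
  have IH1: "card F1 \<le> card {S. S \<subseteq> X0 \<and> shatters F1 S}" by (rule insert.IH[OF F1sub])
  have FU: "F = Fa \<union> Fb" by (auto simp: Fa_def Fb_def)
  have "(\<lambda>A. A - {x}) ` Fa = (\<lambda>A. A) ` Fa" by (rule image_cong) (auto simp: Fa_def)
  then have e: "(\<lambda>A. A - {x}) ` Fa = Fa" by (simp only: image_ident)
  have F0eq: "F0 = Fa \<union> (\<lambda>A. A - {x}) ` Fb" unfolding F0_def
    by (subst FU) (simp only: image_Un e)
  have F1eq: "Fa \<inter> (\<lambda>A. A - {x}) ` Fb = F1"
  proof
    show "Fa \<inter> (\<lambda>A. A - {x}) ` Fb \<subseteq> F1"
    proof
      fix B assume "B \<in> Fa \<inter> (\<lambda>A. A - {x}) ` Fb"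
      then obtain A where "B \<in> F" "x \<notin> B" "A \<in> F" "x \<in> A" "B = A - {x}" by (auto simp: Fa_def Fb_def)
      then have "insert x B = A" by auto
      then show "B \<in> F1" using \<open>B \<in> F\<close> \<open>x \<notin> B\<close> \<open>A \<in> F\<close> by (auto simp: F1_def)
    qed
  next
    show "F1 \<subseteq> Fa \<inter> (\<lambda>A. A - {x}) ` Fb"
    proof
      fix B assume "B \<in> F1"
      then have "B \<in> Fa" "insert x B \<in> Fb" "B = insert x B - {x}" by (auto simp: F1_def Fa_def Fb_def)
      then show "B \<in> Fa \<inter> (\<lambda>A. A - {x}) ` Fb" by blast
    qed
  qed
  have injb: "inj_on (\<lambda>A. A - {x}) Fb" unfolding inj_on_def Fb_def by blast
  have cF: "card F = card Fa + card Fb"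
  proof -
    have "F = Fa \<union> Fb" "Fa \<inter> Fb = {}" by (auto simp: Fa_def Fb_def)
    then show ?thesis using finF by (metis card_Un_disjoint finite_Un)
  qed
  have finab: "finite Fa" "finite Fb" using finF by (auto simp: Fa_def Fb_def)
  have cF0: "card F0 + card F1 = card Fa + card Fb"
    using card_Un_Int[of Fa "(\<lambda>A. A - {x}) ` Fb"] finab card_image[OF injb] F0eq F1eq by simp
  define Sh0 where "Sh0 = {S. S \<subseteq> X0 \<and> shatters F0 S}"
  define Sh1 where "Sh1 = {S. S \<subseteq> X0 \<and> shatters F1 S}"
  have sub: "Sh0 \<union> insert x ` Sh1 \<subseteq> {S. S \<subseteq> insert x X0 \<and> shatters F S}"
  proof
    fix T assume "T \<in> Sh0 \<union> insert x ` Sh1"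
    then show "T \<in> {S. S \<subseteq> insert x X0 \<and> shatters F S}"
    proof
      assume T: "T \<in> Sh0"
      then have "T \<subseteq> X0" "shatters F0 T" by (auto simp: Sh0_def)
      have "x \<notin> T" using \<open>T \<subseteq> X0\<close> insert.hyps(2) by auto
      have "(\<lambda>A. A \<inter> T) ` F0 = (\<lambda>A. A \<inter> T) ` F"
        unfolding F0_def image_image using \<open>x \<notin> T\<close> by (intro image_cong) auto
      then show ?thesis using \<open>T \<subseteq> X0\<close> \<open>shatters F0 T\<close> by (auto simp: shatters_def)
    next
      assume "T \<in> insert x ` Sh1"
      then obtain S where S: "S \<subseteq> X0" "shatters F1 S" "T = insert x S" by (auto simp: Sh1_def)
      have "x \<notin> S" using S(1) insert.hyps(2) by auto
      have "(\<lambda>A. A \<inter> T) ` F = Pow T"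
      proof
        show "(\<lambda>A. A \<inter> T) ` F \<subseteq> Pow T" by auto
      next
        show "Pow T \<subseteq> (\<lambda>A. A \<inter> T) ` F"
        proof
          fix U assume "U \<in> Pow T"
          then have h: "U - {x} \<in> Pow S" using S(3) by auto
          have e: "(\<lambda>A. A \<inter> S) ` F1 = Pow S" using S(2) by (simp only: shatters_def)
          have "U - {x} \<in> (\<lambda>A. A \<inter> S) ` F1" using h by (simp only: e)
          then obtain B where B: "B \<in> F1" "B \<inter> S = U - {x}" by (metis imageE)
          then have BF: "B \<in> F" "insert x B \<in> F" "x \<notin> B" by (auto simp: F1_def)
          show "U \<in> (\<lambda>A. A \<inter> T) ` F"
          proof (cases "x \<in> U")
            case True
            have "insert x B \<inter> T = U" using B(2) True S(3) \<open>U \<in> Pow T\<close> by auto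
            then show ?thesis using BF by blast
          next
            case False
            have "B \<inter> T = U" using B(2) False S(3) BF(3) \<open>U \<in> Pow T\<close> by auto
            then show ?thesis using BF by blast
          qed
        qed
      qed
      then show ?thesis using S by (auto simp: shatters_def)
    qed
  qed
  have disj: "Sh0 \<inter> insert x ` Sh1 = {}" using insert.hyps(2) by (auto simp: Sh0_def)
  have finSh: "finite Sh0" "finite (insert x ` Sh1)"
    using insert.hyps(1) by (auto simp: Sh0_def Sh1_def)
  have injx: "inj_on (insert x) Sh1" unfolding inj_on_def Sh1_def
  proof (intro ballI impI)
    fix S1 S2 assume "S1 \<in> {S. S \<subseteq> X0 \<and> shatters F1 S}" "S2 \<in> {S. S \<subseteq> X0 \<and> shatters F1 S}"
      "insert x S1 = insert x S2"
    then show "S1 = S2" using insert.hyps(2) by (metis insert_ident mem_Collect_eq subsetD)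
  qed
  have "card F = card F0 + card F1" using cF cF0 by simp
  also have "\<dots> \<le> card Sh0 + card Sh1" using IH0 IH1 by (simp add: Sh0_def Sh1_def)
  also have "\<dots> = card (Sh0 \<union> insert x ` Sh1)"
    using card_Un_disjoint[OF finSh disj] card_image[OF injx] by simp
  also have "\<dots> \<le> card {S. S \<subseteq> insert x X0 \<and> shatters F S}"
    by (rule card_mono[OF _ sub]) (use insert.hyps(1) in auto)
  finally show ?case .
qed

lemma card_small_subsets:
  assumes "finite X"
  shows "card {S. S \<subseteq> X \<and> card S \<le> k} \<le> (card X + 1)^k"
proof -
  define G where "G = (\<lambda>g::nat \<Rightarrow> 'a option. {a. Some a \<in> g ` {..<k}})"
  have "{S. S \<subseteq> X \<and> card S \<le> k} \<subseteq> G ` (PiE {..<k} (\<lambda>_. insert None (Some ` X)))"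
  proof
    fix S assume S: "S \<in> {S. S \<subseteq> X \<and> card S \<le> k}"
    then have finS: "finite S" using assms finite_subset by blast
    obtain xs where xs: "set xs = S" "distinct xs" using finite_distinct_list[OF finS] by blast
    have len: "length xs \<le> k" using S xs distinct_card by fastforce
    define g where "g = (\<lambda>i. if i < k then (if i < length xs then Some (xs ! i) else None) else undefined)"
    have "g \<in> PiE {..<k} (\<lambda>_. insert None (Some ` X))"
    proof -
      have "\<forall>i<length xs. xs!i \<in> X" using S xs nth_mem by blast
      then show ?thesis by (auto simp: g_def PiE_def extensional_def)
    qed
    moreover have "G g = S"
    proof
      show "G g \<subseteq> S" using xs by (auto simp: G_def g_def split: if_splits)
      show "S \<subseteq> G g"
      proof
        fix a assume "a \<in> S"
        then obtain i where "i < length xs" "xs ! i = a" using xs by (metis in_set_conv_nth)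
        then have "g i = Some a" "i \<in> {..<k}" using len by (auto simp: g_def)
        then show "a \<in> G g" unfolding G_def by (metis (mono_tags, lifting) image_eqI mem_Collect_eq)
      qed
    qed
    ultimately show "S \<in> G ` (PiE {..<k} (\<lambda>_. insert None (Some ` X)))" by blast
  qed
  then have "card {S. S \<subseteq> X \<and> card S \<le> k} \<le> card (G ` (PiE {..<k} (\<lambda>_. insert None (Some ` X))))"
    by (intro card_mono finite_imageI finite_PiE) (use assms in auto)
  also have "\<dots> \<le> card (PiE {..<k} (\<lambda>_. insert None (Some ` X)))" by (rule card_image_le) (intro finite_PiE, use assms in auto)
  also have "\<dots> = (card X + 1)^k"
    using assms by (simp add: card_PiE card_image)
  finally show ?thesis .
qed



definition traces :: "(real^'d) set \<Rightarrow> (real^'d) set set" where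
  "traces X = {{x\<in>X. c \<le> a \<bullet> x} | a c. True}"

lemma traces_sub: "traces X \<subseteq> Pow X" by (auto simp: traces_def)

lemma shatter_small:
  fixes X :: "(real^'d) set"
  assumes "finite X" "S \<subseteq> X" "shatters (traces X) S"
  shows "card S \<le> CARD('d) + 1"
proof (rule ccontr)
  assume "\<not> ?thesis"
  then have cS: "card S \<ge> DIM(real^'d) + 2" by simp
  have finS: "finite S" using assms finite_subset by blast
  have "affine_dependent S" by (rule affine_dependent_biggerset[OF finS cS])
  then obtain M P where MP: "M \<inter> P = {}" "M \<union> P = S" "convex hull M \<inter> convex hull P \<noteq> {}"
    using Radon_partition[OF finS] by blast
  then obtain z where z: "z \<in> convex hull M" "z \<in> convex hull P" by blast
  have "M \<in> (\<lambda>A. A \<inter> S) ` traces X" using assms(3) MP by (auto simp: shatters_def)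
  then obtain a c where Meq: "M = {x\<in>X. c \<le> a \<bullet> x} \<inter> S" by (auto simp: traces_def)
  have "M \<subseteq> {x. c \<le> a \<bullet> x}" using Meq by auto
  then have "convex hull M \<subseteq> {x. c \<le> a \<bullet> x}" by (intro hull_minimal) (auto simp: convex_halfspace_ge)
  then have z1: "c \<le> a \<bullet> z" using z by auto
  have "P \<subseteq> {x. a \<bullet> x < c}"
  proof
    fix x assume "x \<in> P"
    then have "x \<in> S" "x \<in> X" "x \<notin> M" using MP assms(2) by auto
    then have "\<not> c \<le> a \<bullet> x" using Meq by blast
    then show "x \<in> {x. a \<bullet> x < c}" by simp
  qed
  then have "convex hull P \<subseteq> {x. a \<bullet> x < c}" by (intro hull_minimal) (auto simp: convex_halfspace_lt)
  then have "a \<bullet> z < c" using z by auto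
  with z1 show False by simp
qed

lemma card_traces:
  fixes X :: "(real^'d) set"
  assumes "finite X"
  shows "card (traces X) \<le> (card X + 1)^(CARD('d)+1)"
proof -
  have "card (traces X) \<le> card {S. S \<subseteq> X \<and> shatters (traces X) S}"
    by (rule pajor[OF assms traces_sub])
  also have "\<dots> \<le> card {S. S \<subseteq> X \<and> card S \<le> CARD('d)+1}"
    by (rule card_mono) (use assms shatter_small[OF assms] in auto)
  also have "\<dots> \<le> (card X + 1)^(CARD('d)+1)" by (rule card_small_subsets[OF assms])
  finally show ?thesis .
qed

definition unions :: "(real^'d) set \<Rightarrow> nat \<Rightarrow> (real^'d) set set" where
  "unions X h = {\<Union>G | G. G \<subseteq> traces X \<and> card G \<le> h}"

lemma unions_sub: "U \<in> unions X h \<Longrightarrow> U \<subseteq> X" using traces_sub by (auto simp: unions_def)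

lemma card_unions:
  fixes X :: "(real^'d) set"
  assumes "finite X"
  shows "card (unions X h) \<le> ((card X + 1)^(CARD('d)+1) + 1)^h"
proof -
  have finT: "finite (traces X)" using assms traces_sub finite_Pow_iff finite_subset by metis
  have "card (unions X h) \<le> card {G. G \<subseteq> traces X \<and> card G \<le> h}"
  proof -
    have "unions X h = Union ` {G. G \<subseteq> traces X \<and> card G \<le> h}" by (auto simp: unions_def)
    moreover have "finite {G. G \<subseteq> traces X \<and> card G \<le> h}" using finT by simp
    ultimately show ?thesis by (simp add: card_image_le)
  qed
  also have "\<dots> \<le> (card (traces X) + 1)^h" by (rule card_small_subsets[OF finT])
  also have "\<dots> \<le> ((card X + 1)^(CARD('d)+1) + 1)^h"
    using card_traces[OF assms] by (intro power_mono) auto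
  finally show ?thesis .
qed



lemma exp_card_mono:
  assumes "0 < u" "u \<le> (n::real)" "lam \<ge> 0"
  shows "exp (-2 * lam^2 / u) \<le> exp (-2 * lam^2 / n)"
proof -
  have "lam^2 / n \<le> lam^2 / u" using assms by (intro divide_left_mono) auto
  then show ?thesis by simp
qed

lemma good_coloring:
  fixes X :: "'a set" and UU :: "'a set set" and lam :: real
  assumes fin: "finite X" and r: "r > 0" and UU: "\<And>U. U \<in> UU \<Longrightarrow> U \<subseteq> X" "finite UU"
    and lam: "lam \<ge> 0" and small: "real r * real (card UU) * exp (-2 * lam^2 / real (card X)) < 1"
  shows "\<exists>f. (\<forall>x\<in>X. f x < r) \<and> (\<forall>U\<in>UU. \<forall>j<r. real (card {x\<in>U. f x = j}) \<ge> real (card U) / real r - lam)"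
proof -
  define P :: "('a \<Rightarrow> nat) pmf" where "P = Pi_pmf X 0 (\<lambda>_. pmf_of_set {..<r})"
  define Bad :: "'a set \<Rightarrow> nat \<Rightarrow> ('a \<Rightarrow> nat) set" where "Bad U j = {f. real (card {x\<in>U. f x = j}) < real (card U) / real r - lam}" for U j
  define E where "E = exp (-2 * lam^2 / real (card X))"
  have bnd: "measure_pmf.prob P (Bad U j) \<le> E" if U: "U \<in> UU" and j: "j < r" for U j
  proof (cases "U = {}")
    case True
    then have "Bad U j = {}" using lam by (auto simp: Bad_def)
    then show ?thesis by (simp add: E_def)
  next
    case False
    have UX: "U \<subseteq> X" by (rule UU(1)[OF U])
    have finU: "finite U" using fin UX finite_subset by blast
    have cU: "0 < card U" using False finU by (simp add: card_gt_0_iff)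
    define Y where "Y = (\<lambda>x f. if (f::'a \<Rightarrow> nat) x = j then 1 else (0::real))"
    have expY: "measure_pmf.expectation P (Y x) = 1 / real r" if "x \<in> U" for x
    proof -
      have "measure_pmf.expectation P (Y x) = measure_pmf.expectation (map_pmf (\<lambda>f. f x) P) (\<lambda>k. if k = j then 1 else (0::real))"
        by (simp add: Y_def)
      also have "map_pmf (\<lambda>f. f x) P = pmf_of_set {..<r}"
        using that UX fin by (simp add: P_def Pi_pmf_component subsetD)
      also have "measure_pmf.expectation (pmf_of_set {..<r}) (\<lambda>k. if k = j then 1 else (0::real)) = 1 / real r"
      proof -
        have "measure_pmf.expectation (pmf_of_set {..<r}) (\<lambda>k. if k = j then 1 else (0::real))
           = (\<Sum>k\<in>{..<r}. if k = j then 1 else (0::real)) / real (card {..<r})"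
          by (rule integral_pmf_of_set) (use r in auto)
        also have "\<dots> = 1 / real r" using j by simp
        finally show ?thesis .
      qed
      finally show ?thesis .
    qed
    interpret H: Hoeffding_ineq "measure_pmf P" U Y "\<lambda>_. 0" "\<lambda>_. 1" "\<Sum>x\<in>U. measure_pmf.expectation P (Y x)"
    proof unfold_locales
      show "finite U" by (rule finU)
      have "prob_space.indep_vars (measure_pmf P) (\<lambda>_. count_space UNIV) (\<lambda>x f. f x) X"
        unfolding P_def by (rule indep_vars_Pi_pmf[OF fin])
      then have "prob_space.indep_vars (measure_pmf P) (\<lambda>_. count_space UNIV) (\<lambda>x f. f x) U"
        by (rule prob_space.indep_vars_subset[OF measure_pmf.prob_space_axioms _ UX])
      then show "prob_space.indep_vars (measure_pmf P) (\<lambda>_. borel) Y U"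
        unfolding Y_def
        by (rule prob_space.indep_vars_compose2[where Y = "\<lambda>_ k. if k = j then 1 else (0::real)", OF measure_pmf.prob_space_axioms]) auto
    qed (auto simp: Y_def)
    have sumY: "(\<Sum>x\<in>U. Y x f) = real (card {x\<in>U. f x = j})" for f
    proof -
      have "(\<Sum>x\<in>U. Y x f) = (\<Sum>x\<in>{x\<in>U. f x = j}. 1)"
        unfolding Y_def using finU by (simp add: sum.If_cases Int_def conj_commute)
      then show ?thesis by simp
    qed
    have mu: "(\<Sum>x\<in>U. measure_pmf.expectation P (Y x)) = real (card U) / real r"
      using expY by simp
    have "Bad U j \<subseteq> {f \<in> space (measure_pmf P). (\<Sum>x\<in>U. Y x f) \<le> (\<Sum>x\<in>U. measure_pmf.expectation P (Y x)) - lam}"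
      by (auto simp: Bad_def sumY mu)
    then have "measure_pmf.prob P (Bad U j) \<le> measure_pmf.prob P {f \<in> space (measure_pmf P). (\<Sum>x\<in>U. Y x f) \<le> (\<Sum>x\<in>U. measure_pmf.expectation P (Y x)) - lam}"
      by (intro measure_pmf.finite_measure_mono) auto
    also have "\<dots> \<le> exp (-2 * lam^2 / (\<Sum>x\<in>U. (1 - 0)\<^sup>2))"
      by (rule H.Hoeffding_ineq_le[OF lam]) (use cU in simp)
    also have "(\<Sum>x\<in>U. (1 - 0::real)\<^sup>2) = real (card U)" by simp
    also have "exp (-2 * lam^2 / real (card U)) \<le> E" unfolding E_def
      using cU card_mono[OF fin UX] lam by (intro exp_card_mono) auto
    finally show ?thesis .
  qed
  define Bu where "Bu = (\<Union>p\<in>UU \<times> {..<r}. Bad (fst p) (snd p))"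
  have "measure_pmf.prob P Bu \<le> (\<Sum>p\<in>UU \<times> {..<r}. measure_pmf.prob P (Bad (fst p) (snd p)))"
    unfolding Bu_def by (rule measure_pmf.finite_measure_subadditive_finite) (use UU(2) in auto)
  also have "\<dots> \<le> (\<Sum>p\<in>UU \<times> {..<r}. E)" by (intro sum_mono) (auto intro: bnd)
  also have "\<dots> = real r * real (card UU) * E" by (simp add: card_cartesian_product)
  also have "\<dots> < 1" using small by (simp add: E_def)
  finally have "measure_pmf.prob P Bu < 1" .
  then have "measure_pmf.prob P (UNIV - Bu) \<noteq> 0"
    using measure_pmf.prob_compl[of Bu P] by simp
  then obtain f where f: "f \<in> set_pmf P" "f \<notin> Bu" using measure_pmf_zero_iff by blast
  have "f \<in> PiE_dflt X 0 (set_pmf \<circ> (\<lambda>_. pmf_of_set {..<r}))"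
    using set_Pi_pmf_subset'[OF fin, where dflt=0 and p="\<lambda>_. pmf_of_set {..<r}"] f(1) unfolding P_def by blast
  moreover have "set_pmf (pmf_of_set {..<r}) = {..<r}" using r by (intro set_pmf_of_set) auto
  ultimately have "\<forall>x\<in>X. f x < r" by (auto simp: PiE_dflt_def)
  moreover have "\<forall>U\<in>UU. \<forall>j<r. real (card {x\<in>U. f x = j}) \<ge> real (card U) / real r - lam"
    using f(2) by (auto simp: Bu_def Bad_def not_less)
  ultimately show ?thesis by blast
qed



lemma asym1:
  fixes r D h :: nat
  shows "eventually (\<lambda>n::nat. real r * (((real n + 1)^(D+1) + 1)^h) * exp (-2 * (real n powr (3/4))^2 / real n) < 1) at_top"
proof -
  have "((\<lambda>n::nat. real r * (((real n + 1)^(D+1) + 1)^h) * exp (-2 * (real n powr (3/4))^2 / real n)) \<longlongrightarrow> 0) at_top"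
    by real_asymp
  then show ?thesis by (rule order_tendstoD) simp
qed

lemma asym2a: fixes c :: real shows "eventually (\<lambda>t::nat. c < real t powr (1/20)) at_top"
  by real_asymp

lemma asym2:
  fixes r :: nat
  shows "eventually (\<lambda>t::nat. real r ^ 2 * (real r * real t + real t powr (4/5) + 1) powr (3/4) < real t powr (4/5)) at_top"
proof -
  define c where "c = real r ^ 2 * (real r + 2) powr (3/4)"
  have "eventually (\<lambda>t::nat. c < real t powr (1/20) \<and> t \<ge> 1) at_top"
    using asym2a[of c] eventually_ge_at_top[of 1] by (rule eventually_conj)
  then show ?thesis
  proof (rule eventually_mono)
    fix t :: nat assume t: "c < real t powr (1/20) \<and> t \<ge> 1"
    have t1: "real t \<ge> 1" using t by simp
    have "real t powr (4/5) \<le> real t" using powr_mono[of "4/5" 1 "real t"] t1 by simp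
    then have "real r * real t + real t powr (4/5) + 1 \<le> (real r + 2) * real t" using t1 by (simp add: algebra_simps)
    then have "(real r * real t + real t powr (4/5) + 1) powr (3/4) \<le> ((real r + 2) * real t) powr (3/4)"
      by (intro powr_mono2) auto
    also have "\<dots> = (real r + 2) powr (3/4) * real t powr (3/4)" by (simp add: powr_mult)
    finally have "real r ^ 2 * (real r * real t + real t powr (4/5) + 1) powr (3/4) \<le> c * real t powr (3/4)"
      unfolding c_def by (simp add: mult_left_mono mult.assoc)
    also have "\<dots> < real t powr (1/20) * real t powr (3/4)"
      using t t1 by (intro mult_strict_right_mono) auto
    also have "\<dots> = real t powr (4/5)" using t1 by (simp add: powr_add[symmetric])
    finally show "real r ^ 2 * (real r * real t + real t powr (4/5) + 1) powr (3/4) < real t powr (4/5)" .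
  qed
qed

lemma asym3: "(\<lambda>t::nat. real t powr (4/5) + 1) \<in> o(\<lambda>t. real t)"
  by real_asymp



lemma separate:
  fixes Y :: "(real^'d) set"
  assumes "finite Y" "s \<notin> convex hull Y"
  shows "\<exists>a c. (\<forall>y\<in>Y. a \<bullet> y < c) \<and> c \<le> a \<bullet> s"
proof -
  have "closed (convex hull Y)" using assms(1) by (simp add: compact_convex_hull finite_imp_compact compact_imp_closed)
  then obtain a b where ab: "a \<bullet> s < b" "\<forall>x\<in>convex hull Y. a \<bullet> x > b"
    using separating_hyperplane_closed_point[OF convex_convex_hull _ assms(2)] by blast
  have "\<forall>y\<in>Y. (-a) \<bullet> y < -b" using ab(2) hull_inc[of _ Y convex] by fastforce
  moreover have "-b \<le> (-a) \<bullet> s" using ab(1) by simp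
  ultimately show ?thesis by blast
qed

lemma box_finite: "finite {s::real^'d. int_point s \<and> (\<forall>i. \<bar>s$i\<bar> \<le> R)}"
proof -
  define A where "A = {x::real. x \<in> \<int> \<and> \<bar>x\<bar> \<le> R}"
  have "A \<subseteq> real_of_int ` {-\<lceil>R\<rceil>..\<lceil>R\<rceil>}"
  proof
    fix x assume "x \<in> A"
    then obtain m where m: "x = of_int m" "\<bar>real_of_int m\<bar> \<le> R" unfolding A_def by (auto elim: Ints_cases)
    then have "m \<in> {-\<lceil>R\<rceil>..\<lceil>R\<rceil>}" by (auto simp: abs_le_iff) (linarith+)
    then show "x \<in> real_of_int ` {-\<lceil>R\<rceil>..\<lceil>R\<rceil>}" using m by blast
  qed
  then have finA: "finite A" using finite_subset by blast
  have "{s::real^'d. int_point s \<and> (\<forall>i. \<bar>s$i\<bar> \<le> R)} \<subseteq> (\<lambda>g. \<chi> i. g i) ` (PiE UNIV (\<lambda>_. A))"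
  proof
    fix s :: "real^'d" assume "s \<in> {s. int_point s \<and> (\<forall>i. \<bar>s$i\<bar> \<le> R)}"
    then have "(\<lambda>i. s$i) \<in> PiE UNIV (\<lambda>_. A)" by (auto simp: A_def int_point_def)
    moreover have "s = (\<chi> i. s$i)" by simp
    ultimately show "s \<in> (\<lambda>g. \<chi> i. g i) ` (PiE UNIV (\<lambda>_. A))" by blast
  qed
  moreover have "finite ((\<lambda>g. \<chi> i. g i) ` (PiE UNIV (\<lambda>_. A)) :: (real^'d) set)"
    using finA by (intro finite_imageI finite_PiE) auto
  ultimately show ?thesis using finite_subset by blast
qed

lemma key:
  fixes X :: "(real^'d) set" and t n r :: nat
  assumes r: "r > 0" and fin: "finite X" and cX: "card X = n" and ip: "\<forall>x\<in>X. int_point x"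
   and A: "real r * (((real n + 1)^(CARD('d)+1) + 1)^(2^CARD('d))) * exp (-2 * (real n powr (3/4))^2 / real n) < 1"
   and T: "real r ^ 2 * real n powr (3/4) < real n - real r * real t"
  shows "\<exists>f::real^'d \<Rightarrow> nat. (\<forall>x\<in>X. f x < r) \<and> (\<forall>C. C \<subseteq> X \<and> card C \<le> t \<longrightarrow>
             (\<exists>p. int_point p \<and> (\<forall>j<r. p \<in> convex hull ({x\<in>X. f x = j} - C))))"
proof -
  define lam where "lam = real n powr (3/4)"
  define h where "h = (2::nat)^CARD('d)"
  define UU where "UU = unions X h"
  have finUU: "finite UU" unfolding UU_def
    by (rule finite_subset[of _ "Pow X"]) (use fin unions_sub in auto)
  have "card UU \<le> ((n + 1)^(CARD('d)+1) + 1)^h" unfolding UU_def using card_unions[OF fin] cX by simp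
  then have cUU: "real (card UU) \<le> ((real n + 1)^(CARD('d)+1) + 1)^h"
    by (metis (mono_tags, lifting) of_nat_1 of_nat_add of_nat_le_iff of_nat_power)
  have small: "real r * real (card UU) * exp (-2 * lam^2 / real (card X)) < 1"
  proof -
    have "real r * real (card UU) * exp (-2 * lam^2 / real (card X))
        \<le> real r * (((real n + 1)^(CARD('d)+1) + 1)^h) * exp (-2 * lam^2 / real (card X))"
      using cUU by (intro mult_right_mono mult_left_mono) auto
    also have "\<dots> < 1" using A by (simp add: lam_def h_def cX)
    finally show ?thesis .
  qed
  have lam0: "lam \<ge> 0" by (simp add: lam_def)
  obtain f where fr: "\<forall>x\<in>X. f x < r"
    and fgood: "\<forall>U\<in>UU. \<forall>j<r. real (card {x\<in>U. f x = j}) \<ge> real (card U) / real r - lam"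
    using good_coloring[OF fin r _ finUU lam0 small] unions_sub unfolding UU_def by blast
  have "\<forall>C. C \<subseteq> X \<and> card C \<le> t \<longrightarrow> (\<exists>p. int_point p \<and> (\<forall>j<r. p \<in> convex hull ({x\<in>X. f x = j} - C)))"
  proof (intro allI impI)
    fix C assume C: "C \<subseteq> X \<and> card C \<le> t"
    show "\<exists>p. int_point p \<and> (\<forall>j<r. p \<in> convex hull ({x\<in>X. f x = j} - C))"
    proof (rule ccontr)
      assume nop: "\<not> ?thesis"
      define Y where "Y j = {x\<in>X. f x = j} - C" for j
      define R where "R = (\<Sum>x\<in>X. \<Sum>i\<in>UNIV. \<bar>x$i\<bar>)"
      define S where "S = {s::real^'d. int_point s \<and> (\<forall>i. \<bar>s$i\<bar> \<le> R)}"
      have finS: "finite S" unfolding S_def by (rule box_finite)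
      have ipS: "\<forall>s\<in>S. int_point s" by (simp add: S_def)
      have XS: "X \<subseteq> S"
      proof
        fix x assume x: "x \<in> X"
        have "\<bar>x$i\<bar> \<le> R" for i
        proof -
          have "\<bar>x$i\<bar> \<le> (\<Sum>i\<in>UNIV. \<bar>x$i\<bar>)" by (rule member_le_sum) auto
          also have "\<dots> \<le> R" unfolding R_def using x fin by (intro member_le_sum) (auto intro: sum_nonneg)
          finally show ?thesis .
        qed
        then show "x \<in> S" using x ip by (simp add: S_def)
      qed
      have mid: "\<forall>u\<in>S. \<forall>v\<in>S. int_point ((1/2) *\<^sub>R (u+v)) \<longrightarrow> (1/2) *\<^sub>R (u+v) \<in> S"
      proof (intro ballI impI)
        fix u v assume uv: "u \<in> S" "v \<in> S" "int_point ((1/2) *\<^sub>R (u+v))"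
        have "\<bar>((1/2) *\<^sub>R (u+v))$i\<bar> \<le> R" for i
        proof -
          have "\<bar>u$i\<bar> \<le> R" "\<bar>v$i\<bar> \<le> R" using uv by (auto simp: S_def)
          then show ?thesis by (simp add: abs_le_iff)
        qed
        then show "(1/2) *\<^sub>R (u+v) \<in> S" using uv(3) by (simp add: S_def)
      qed
      define I where "I = {p \<in> S \<times> {..<r}. fst p \<notin> convex hull (Y (snd p))}"
      have "I \<subseteq> S \<times> {..<r}" unfolding I_def by blast
      then have finI: "finite I" using finS by (meson finite_SigmaI finite_lessThan finite_subset)
      have finY: "finite (Y j)" for j using fin by (simp add: Y_def)
      define AC where "AC p = (SOME ac. (\<forall>y\<in>Y (snd p). fst ac \<bullet> y < snd ac) \<and> snd ac \<le> fst ac \<bullet> fst p)" for p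
      have ACp: "(\<forall>y\<in>Y (snd p). fst (AC p) \<bullet> y < snd (AC p)) \<and> snd (AC p) \<le> fst (AC p) \<bullet> fst p" if "p \<in> I" for p
      proof -
        have "fst p \<notin> convex hull (Y (snd p))" using that by (simp add: I_def)
        then obtain a c where "(\<forall>y\<in>Y (snd p). a \<bullet> y < c) \<and> c \<le> a \<bullet> fst p" using separate[OF finY] by blast
        then have "\<exists>ac. (\<forall>y\<in>Y (snd p). fst ac \<bullet> y < snd ac) \<and> snd ac \<le> fst ac \<bullet> fst p"
          by (intro exI[of _ "(a, c)"]) simp
        then show ?thesis unfolding AC_def by (rule someI_ex)
      qed
      have cov: "\<forall>s\<in>S. \<exists>i\<in>I. fst (AC i) \<bullet> s \<ge> snd (AC i)"
      proof
        fix s assume s: "s \<in> S"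
        then have "int_point s" by (simp add: S_def)
        then obtain j where j: "j < r" "s \<notin> convex hull (Y j)" using nop by (auto simp: Y_def)
        then have "(s, j) \<in> I" using s by (simp add: I_def)
        then show "\<exists>i\<in>I. fst (AC i) \<bullet> s \<ge> snd (AC i)" using ACp by fastforce
      qed
      obtain J where JI: "J \<subseteq> I" and cJ: "card J \<le> h" and covJ: "\<forall>s\<in>S. \<exists>i\<in>J. fst (AC i) \<bullet> s \<ge> snd (AC i)"
        using doignon[OF finS ipS mid finI cov] unfolding h_def by blast
      define tr where "tr i = {x\<in>X. snd (AC i) \<le> fst (AC i) \<bullet> x}" for i
      define U where "U j = \<Union> (tr ` {i\<in>J. snd i = j})" for j
      have finJ: "finite J" using finI JI finite_subset by blast
      have UUU: "U j \<in> UU" for j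
      proof -
        have "tr ` {i\<in>J. snd i = j} \<subseteq> traces X" by (auto simp: tr_def traces_def)
        moreover have "card (tr ` {i\<in>J. snd i = j}) \<le> h"
          using card_image_le[of "{i\<in>J. snd i = j}" tr] card_mono[OF finJ, of "{i\<in>J. snd i = j}"] cJ finJ by auto
        ultimately show ?thesis unfolding UU_def unions_def U_def by blast
      qed
      have Usub: "U j \<subseteq> X" for j by (auto simp: U_def tr_def)
      have finU: "finite (U j)" for j using Usub fin finite_subset by blast
      have Xcov: "X \<subseteq> (\<Union>j<r. U j)"
      proof
        fix x assume x: "x \<in> X"
        then obtain i where i: "i \<in> J" "fst (AC i) \<bullet> x \<ge> snd (AC i)" using covJ XS by blast
        then have "snd i < r" using JI by (auto simp: I_def)
        moreover have "x \<in> tr i" using i x by (simp add: tr_def)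
        then have "x \<in> U (snd i)" unfolding U_def using i(1) by blast
        ultimately show "x \<in> (\<Union>j<r. U j)" by blast
      qed
      have inC: "{x\<in>U j. f x = j} \<subseteq> C" for j
      proof
        fix x assume "x \<in> {x\<in>U j. f x = j}"
        then obtain i where i: "i \<in> J" "snd i = j" "x \<in> X" "snd (AC i) \<le> fst (AC i) \<bullet> x" "f x = j"
          by (auto simp: U_def tr_def)
        have "i \<in> I" using i JI by blast
        show "x \<in> C"
        proof (rule ccontr)
          assume "x \<notin> C"
          then have "x \<in> Y (snd i)" using i by (simp add: Y_def)
          then have "fst (AC i) \<bullet> x < snd (AC i)" using ACp[OF \<open>i \<in> I\<close>] by blast
          then show False using i(4) by simp
        qed
      qed
      have "real n \<le> real (card (\<Union>j<r. U j))"
        using card_mono[OF _ Xcov] cX finU by auto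
      also have "\<dots> \<le> (\<Sum>j<r. real (card (U j)))"
        using card_UN_le[of "{..<r}" U] by (simp flip: of_nat_sum)
      finally have sumU: "real n \<le> (\<Sum>j<r. real (card (U j)))" .
      have "(\<Sum>j<r. real (card (U j)) / real r - lam) \<le> (\<Sum>j<r. real (card {x\<in>U j. f x = j}))"
        using fgood UUU by (intro sum_mono) auto
      also have "\<dots> = real (card (\<Union>j<r. {x\<in>U j. f x = j}))"
        by (subst card_UN_disjoint) (use finU in auto)
      also have "\<dots> \<le> real (card C)"
        using inC C fin by (intro of_nat_mono card_mono) (auto intro: finite_subset)
      also have "\<dots> \<le> real t" using C by simp
      finally have le: "(\<Sum>j<r. real (card (U j)) / real r - lam) \<le> real t" .
      have "(\<Sum>j<r. real (card (U j)) / real r - lam) = (\<Sum>j<r. real (card (U j))) / real r - real r * lam"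
        by (simp add: sum_subtractf sum_divide_distrib)
      also have "\<dots> \<ge> real n / real r - real r * lam"
        using sumU r by (simp add: divide_right_mono)
      finally have "real n / real r - real r * lam \<le> real t" using le by linarith
      then have "real n - real r ^ 2 * lam \<le> real r * real t"
        using r by (simp add: field_simps power2_eq_square)
      then show False using T unfolding lam_def by linarith
    qed
  qed
  then show ?thesis using fr by blast
qed



theorem mainTheorem3:
  fixes r :: nat
  assumes "r > 0"
  shows "\<exists>L :: nat \<Rightarrow> nat.
    (\<lambda>t. real (L t) - real r * real t) \<in> o(\<lambda>t. real t) \<and>
    (\<forall>t > 0. \<forall>X :: (real ^ 'd :: finite) set.
       finite X \<and> card X = L t \<and> (\<forall>x\<in>X. int_point x) \<longrightarrow>
       (\<exists>f :: real ^ 'd \<Rightarrow> nat. (\<forall>x\<in>X. f x < r) \<and>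
          (\<forall>C. C \<subseteq> X \<and> card C \<le> t \<longrightarrow>
             (\<exists>p. int_point p \<and>
                  (\<forall>j<r. p \<in> convex hull ({x\<in>X. f x = j} - C))))))"
proof -
  define D where "D = CARD('d)"
  define h where "h = (2::nat)^CARD('d)"
  define Ac where "Ac n \<longleftrightarrow> real r * (((real n + 1)^(D+1) + 1)^h) * exp (-2 * (real n powr (3/4))^2 / real n) < 1" for n :: nat
  obtain N1 where N1: "\<And>n. n \<ge> N1 \<Longrightarrow> Ac n"
    using asym1[of r D h] unfolding Ac_def eventually_at_top_linorder by blast
  obtain N2 where N2: "\<And>t. t \<ge> N2 \<Longrightarrow> real r ^ 2 * (real r * real t + real t powr (4/5) + 1) powr (3/4) < real t powr (4/5)"
    using asym2[of r] unfolding eventually_at_top_linorder by blast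
  define s where "s t = nat \<lceil>real t powr (4/5)\<rceil>" for t :: nat
  have s_lo: "real t powr (4/5) \<le> real (s t)" for t by (simp add: s_def)
  have s_hi: "real (s t) \<le> real t powr (4/5) + 1" for t
  proof -
    have "real (s t) = real_of_int \<lceil>real t powr (4/5)\<rceil>" by (simp add: s_def)
    also have "\<dots> \<le> real t powr (4/5) + 1" by linarith
    finally show ?thesis .
  qed
  define t0 where "t0 = max (max N1 N2) 1"
  define L where "L t = (if t \<ge> t0 then r * t + s t else r * t0 + s t0)" for t
  have good: "\<exists>f :: real ^ 'd \<Rightarrow> nat. (\<forall>x\<in>X. f x < r) \<and> (\<forall>C. C \<subseteq> X \<and> card C \<le> t \<longrightarrow>
             (\<exists>p. int_point p \<and> (\<forall>j<r. p \<in> convex hull ({x\<in>X. f x = j} - C))))"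
    if t: "t \<ge> t0" and X: "finite X" "card X = r * t + s t" "\<forall>x\<in>X. int_point x" for t and X :: "(real^'d) set"
  proof (rule key[OF assms X(1) X(2) X(3)])
    have N1t: "r * t + s t \<ge> N1"
    proof -
      have "t \<le> r * t" using assms by simp
      moreover have "N1 \<le> t" using t by (simp add: t0_def)
      ultimately show ?thesis by linarith
    qed
    show "real r * (((real (r * t + s t) + 1)^(CARD('d)+1) + 1)^(2^CARD('d))) *
      exp (-2 * (real (r * t + s t) powr (3/4))^2 / real (r * t + s t)) < 1"
      using N1[OF N1t] unfolding Ac_def D_def h_def .
    have "real (r * t + s t) \<le> real r * real t + real t powr (4/5) + 1" using s_hi[of t] by simp
    then have "real (r * t + s t) powr (3/4) \<le> (real r * real t + real t powr (4/5) + 1) powr (3/4)"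
      by (intro powr_mono2) auto
    then have "real r ^ 2 * real (r * t + s t) powr (3/4) \<le> real r ^ 2 * (real r * real t + real t powr (4/5) + 1) powr (3/4)"
      by (intro mult_left_mono) auto
    also have "\<dots> < real t powr (4/5)" using N2 t by (simp add: t0_def)
    also have "\<dots> \<le> real (s t)" by (rule s_lo)
    also have "\<dots> = real (r * t + s t) - real r * real t" by simp
    finally show "real r ^ 2 * real (r * t + s t) powr (3/4) < real (r * t + s t) - real r * real t" .
  qed
  have part2: "\<forall>t > 0. \<forall>X :: (real ^ 'd) set.
       finite X \<and> card X = L t \<and> (\<forall>x\<in>X. int_point x) \<longrightarrow>
       (\<exists>f :: real ^ 'd \<Rightarrow> nat. (\<forall>x\<in>X. f x < r) \<and>
          (\<forall>C. C \<subseteq> X \<and> card C \<le> t \<longrightarrow>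
             (\<exists>p. int_point p \<and>
                  (\<forall>j<r. p \<in> convex hull ({x\<in>X. f x = j} - C)))))"
  proof (intro allI impI)
    fix t :: nat and X :: "(real^'d) set"
    assume "t > 0" and X: "finite X \<and> card X = L t \<and> (\<forall>x\<in>X. int_point x)"
    show "\<exists>f :: real ^ 'd \<Rightarrow> nat. (\<forall>x\<in>X. f x < r) \<and> (\<forall>C. C \<subseteq> X \<and> card C \<le> t \<longrightarrow>
             (\<exists>p. int_point p \<and> (\<forall>j<r. p \<in> convex hull ({x\<in>X. f x = j} - C))))"
    proof (cases "t \<ge> t0")
      case True
      then show ?thesis using good[OF True] X by (simp add: L_def)
    next
      case False
      then obtain f where f: "\<forall>x\<in>X. f x < r" "\<forall>C. C \<subseteq> X \<and> card C \<le> t0 \<longrightarrow>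
             (\<exists>p. int_point p \<and> (\<forall>j<r. p \<in> convex hull ({x\<in>X. f x = j} - C)))"
        using good[of t0 X] X by (auto simp: L_def)
      have "\<forall>C. C \<subseteq> X \<and> card C \<le> t \<longrightarrow>
             (\<exists>p. int_point p \<and> (\<forall>j<r. p \<in> convex hull ({x\<in>X. f x = j} - C)))"
        using f(2) False by auto
      then show ?thesis using f(1) by blast
    qed
  qed
  have "(\<lambda>t. real (L t) - real r * real t) \<in> O(\<lambda>t. real t powr (4/5) + 1)"
  proof (rule bigoI[where c = 1])
    show "eventually (\<lambda>t. norm (real (L t) - real r * real t) \<le> 1 * norm (real t powr (4/5) + 1)) at_top"
      unfolding eventually_at_top_linorder
    proof (intro exI[of _ t0] allI impI)
      fix t assume "t \<ge> t0"
      then have "real (L t) - real r * real t = real (s t)" by (simp add: L_def)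
      then show "norm (real (L t) - real r * real t) \<le> 1 * norm (real t powr (4/5) + 1)"
        using s_hi[of t] by simp
    qed
  qed
  then have "(\<lambda>t. real (L t) - real r * real t) \<in> o(\<lambda>t. real t)"
    using asym3 by (rule landau_o.big_small_trans)
  then show ?thesis using part2 by blast
qed

end
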